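(* Let $V:\mathbb{R}\to\mathbb{R}$ be convex and $L$-Lipschitz with $m:=e^{-V}$ a probability density, and let $C_V>0$ be a constant such that for all $x\in\mathbb{R}$, $C_V^{-1}\le e^{-V(x)}\big/\min\big(\int_{-\infty}^x e^{-V},\int_x^\infty e^{-V}\big)\le C_V$. Let $0<c<C$ and $f\in\mathcal{P}_{c,C}$. Then the optimal transport map $T$ from $m$ to $f$ satisfies $$\frac{c}{C C_V^2}\le T'\le\frac{C C_V^2}{c}.$$
   Context: $\mathcal{P}_{c,C}:=\{g\in\mathcal{P}(\mathbb{R}):\ c\,m\le g\le C\,m\}$. The optimal transport map (for quadratic cost) from $m$ to $f$ on $\mathbb{R}$ is the monotone map $T=F_f^{-1}\circ F_m$, where $F_m,F_f$ are the cumulative distribution functions. *)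

theory Defs
  imports "HOL-Analysis.Analysis"
begin

definition cdf :: "(real \<Rightarrow> real) \<Rightarrow> real \<Rightarrow> real" where
  "cdf g x = (LBINT t:{..x}. g t)"

text \<open>Generalized inverse (quantile function) of a cdf F; for strictly increasing
  continuous F and u in (0,1) this is the usual inverse.\<close>
definition quantile :: "(real \<Rightarrow> real) \<Rightarrow> real \<Rightarrow> real" where
  "quantile F u = Inf {y. u \<le> F y}"

text \<open>Monotone optimal transport map from density m to density f on the real line.\<close>
definition ot_map :: "(real \<Rightarrow> real) \<Rightarrow> (real \<Rightarrow> real) \<Rightarrow> real \<Rightarrow> real" where
  "ot_map m f x = quantile (cdf f) (cdf m x)"

end

theory Submission
  imports Defs "HOL-Analysis.Analysis"
begin

definition lowq :: "(real \<Rightarrow> real) \<Rightarrow> real \<Rightarrow> real \<Rightarrow> bool" where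
  "lowq g p x \<longleftrightarrow> (\<forall>d>0. \<exists>y. y \<noteq> x \<and> \<bar>y - x\<bar> < d \<and> (g y - g x) / (y - x) < p)"
definition upq :: "(real \<Rightarrow> real) \<Rightarrow> real \<Rightarrow> real \<Rightarrow> bool" where
  "upq g q x \<longleftrightarrow> (\<forall>d>0. \<exists>y. y \<noteq> x \<and> \<bar>y - x\<bar> < d \<and> q < (g y - g x) / (y - x))"

lemma incr_interval:
  fixes g :: "real \<Rightarrow> real"
  assumes "mono g" "y \<noteq> x"
  shows "g ((x+y)/2 + \<bar>y-x\<bar>/2) - g ((x+y)/2 - \<bar>y-x\<bar>/2) = (g y - g x) / (y - x) * (2 * (\<bar>y-x\<bar>/2))"
proof (cases "x < y")
  case True
  have "(x+y)/2 + \<bar>y-x\<bar>/2 = y" "(x+y)/2 - \<bar>y-x\<bar>/2 = x" using True by (auto simp: field_simps)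
  then show ?thesis using True by (simp add: field_simps)
next
  case False
  then have F: "y < x" using assms by auto
  have "(x+y)/2 + \<bar>y-x\<bar>/2 = x" "(x+y)/2 - \<bar>y-x\<bar>/2 = y" using F by (auto simp: field_simps)
  then show ?thesis using F by (simp add: field_simps)
qed

lemma cover_int:
  fixes x y :: real assumes "y \<noteq> x"
  shows "x \<in> cball ((x+y)/2) (\<bar>y-x\<bar>/2)" "cball ((x+y)/2) (\<bar>y-x\<bar>/2) \<subseteq> cball x \<bar>y-x\<bar>"
  unfolding mem_cball dist_real_def subset_iff by (auto split: abs_split simp: field_simps)

lemma mu_cball:
  fixes g :: "real \<Rightarrow> real"
  assumes "mono g" "continuous_on UNIV g" "0 \<le> r"
  shows "emeasure (interval_measure g) (cball c r) = ennreal (g (c+r) - g (c-r))"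
  using assms by (simp add: cball_eq_atLeastAtMost emeasure_interval_measure_Icc mono_def)

lemma open_sub_lmeasurable:
  "open (W::real set) \<Longrightarrow> W \<subseteq> U \<Longrightarrow> U \<in> lmeasurable \<Longrightarrow> W \<in> lmeasurable"
  by (metis fmeasurableI2 borel_open sets_completionI_sets sets_lborel)

lemma vitali_step:
  fixes g :: "real \<Rightarrow> real" and E U :: "real set"
  assumes g: "mono g" "continuous_on UNIV g" and pq: "0 < p" "p < q"
    and U: "open U" "U \<in> lmeasurable" and EU: "E \<subseteq> U"
    and Ex: "\<And>x. x \<in> E \<Longrightarrow> lowq g p x \<and> upq g q x"
  obtains W N where "open W" "W \<subseteq> U" "negligible N" "E \<subseteq> W \<union> N"
      "measure lebesgue W \<le> p / q * measure lebesgue U"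
proof -
  define K1 where "K1 = {(c,r). 0 < r \<and> cball c r \<subseteq> U \<and> g (c+r) - g (c-r) \<le> p * (2*r)}"
  have cov1: "\<exists>i. i \<in> K1 \<and> x \<in> cball (fst i) (snd i) \<and> snd i < d" if x: "x \<in> E" and d: "0 < d" for x d
  proof -
    obtain e where e: "e > 0" "ball x e \<subseteq> U" using U(1) EU x open_contains_ball by blast
    have "min d e > 0" using d e by simp
    then obtain y where y: "y \<noteq> x" "\<bar>y-x\<bar> < min d e" "(g y - g x)/(y-x) < p"
      using Ex[OF x] unfolding lowq_def by blast
    define c where "c = (x+y)/2"
    define r where "r = \<bar>y-x\<bar>/2"
    have r: "0 < r" "r < d" using y by (auto simp: r_def)
    have "cball c r \<subseteq> cball x \<bar>y-x\<bar>" using cover_int[OF y(1)] by (simp add: c_def r_def)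
    also have "\<dots> \<subseteq> ball x e" using y(2) by (auto simp: subset_iff)
    finally have sub: "cball c r \<subseteq> U" using e by blast
    have "g (c+r) - g (c-r) = (g y - g x)/(y-x) * (2*r)"
      using incr_interval[OF g(1) y(1)] by (simp add: c_def r_def)
    also have "\<dots> \<le> p * (2*r)" using y(3) r by (intro mult_right_mono) auto
    finally have "(c,r) \<in> K1" using sub r by (simp add: K1_def)
    moreover have "x \<in> cball c r" using cover_int[OF y(1)] by (simp add: c_def r_def)
    ultimately show ?thesis using r by force
  qed
  have pos1: "\<And>i. i \<in> K1 \<Longrightarrow> 0 < snd i" by (auto simp: K1_def)
  obtain C1 where C1: "countable C1" "C1 \<subseteq> K1"
     "pairwise (\<lambda>i j. disjnt (cball (fst i) (snd i)) (cball (fst j) (snd j))) C1"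
     "negligible (E - (\<Union>i\<in>C1. cball (fst i) (snd i)))"
    using Vitali_covering_theorem_cballs[of K1 snd E fst, OF pos1 cov1] by blast
  define E2 where "E2 = E \<inter> (\<Union>i\<in>C1. ball (fst i) (snd i))"
  define K2 where "K2 = {(c,r). 0 < r \<and> (\<exists>i\<in>C1. cball c r \<subseteq> ball (fst i) (snd i)) \<and> q * (2*r) \<le> g (c+r) - g (c-r)}"
  have cov2: "\<exists>j. j \<in> K2 \<and> x \<in> cball (fst j) (snd j) \<and> snd j < d" if x: "x \<in> E2" and d: "0 < d" for x d
  proof -
    obtain i where i: "i \<in> C1" "x \<in> ball (fst i) (snd i)" using x by (auto simp: E2_def)
    obtain e where e: "e > 0" "ball x e \<subseteq> ball (fst i) (snd i)" using i(2) open_contains_ball open_ball by blast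
    have "min d e > 0" using d e by simp
    moreover have "x \<in> E" using x by (simp add: E2_def)
    ultimately obtain y where y: "y \<noteq> x" "\<bar>y-x\<bar> < min d e" "q < (g y - g x)/(y-x)"
      using Ex unfolding upq_def by blast
    define c where "c = (x+y)/2"
    define r where "r = \<bar>y-x\<bar>/2"
    have r: "0 < r" "r < d" using y by (auto simp: r_def)
    have "cball c r \<subseteq> cball x \<bar>y-x\<bar>" using cover_int[OF y(1)] by (simp add: c_def r_def)
    also have "\<dots> \<subseteq> ball x e" using y(2) by (auto simp: subset_iff)
    finally have sub: "cball c r \<subseteq> ball (fst i) (snd i)" using e by blast
    have "q * (2*r) \<le> (g y - g x)/(y-x) * (2*r)" using y(3) r by (intro mult_right_mono) auto
    also have "\<dots> = g (c+r) - g (c-r)"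
      using incr_interval[OF g(1) y(1)] by (simp add: c_def r_def)
    finally have "(c,r) \<in> K2" using sub r i(1) by (auto simp: K2_def)
    moreover have "x \<in> cball c r" using cover_int[OF y(1)] by (simp add: c_def r_def)
    ultimately show ?thesis using r by force
  qed
  have pos2: "\<And>i. i \<in> K2 \<Longrightarrow> 0 < snd i" by (auto simp: K2_def)
  obtain C2 where C2: "countable C2" "C2 \<subseteq> K2"
     "pairwise (\<lambda>i j. disjnt (cball (fst i) (snd i)) (cball (fst j) (snd j))) C2"
     "negligible (E2 - (\<Union>i\<in>C2. cball (fst i) (snd i)))"
    using Vitali_covering_theorem_cballs[of K2 snd E2 fst, OF pos2 cov2] by blast
  define W where "W = (\<Union>j\<in>C2. ball (fst j) (snd j))"
  define N where "N = (E - (\<Union>i\<in>C1. cball (fst i) (snd i))) \<union> (\<Union>i\<in>C1. sphere (fst i) (snd i))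
     \<union> (E2 - (\<Union>i\<in>C2. cball (fst i) (snd i))) \<union> (\<Union>i\<in>C2. sphere (fst i) (snd i))"
  have n1: "negligible (\<Union>i\<in>C1. sphere (fst i) (snd i))"
    using C1(1) by (intro negligible_countable_Union) (auto simp: negligible_sphere)
  have n2: "negligible (\<Union>i\<in>C2. sphere (fst i) (snd i))"
    using C2(1) by (intro negligible_countable_Union) (auto simp: negligible_sphere)
  have "negligible N" unfolding N_def
    by (intro negligible_Un n1 n2 C1(4) C2(4))
  have "E \<subseteq> W \<union> N"
  proof
    fix x assume x: "x \<in> E"
    show "x \<in> W \<union> N"
    proof (cases "x \<in> N")
      case False
      then have "x \<in> (\<Union>i\<in>C1. cball (fst i) (snd i))" using x unfolding N_def by blast
      then obtain i where i: "i \<in> C1" "x \<in> cball (fst i) (snd i)" by blast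
      have "x \<notin> sphere (fst i) (snd i)" using False i(1) unfolding N_def by blast
      then have "x \<in> ball (fst i) (snd i)" using i(2) by (simp add: dist_commute)
      then have "x \<in> E2" using x i(1) by (auto simp: E2_def)
      then have "x \<in> (\<Union>i\<in>C2. cball (fst i) (snd i))" using False unfolding N_def by blast
      then obtain j where j: "j \<in> C2" "x \<in> cball (fst j) (snd j)" by blast
      have "x \<notin> sphere (fst j) (snd j)" using False j(1) unfolding N_def by blast
      then have "x \<in> ball (fst j) (snd j)" using j(2) by (simp add: dist_commute)
      then show ?thesis using j(1) by (auto simp: W_def)
    qed simp
  qed
  have "open W" by (simp add: W_def open_UN)
  have C1U: "(\<Union>i\<in>C1. cball (fst i) (snd i)) \<subseteq> U"
  proof (intro UN_least)
    fix i assume "i \<in> C1" then have "i \<in> K1" using C1(2) by blast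
    then show "cball (fst i) (snd i) \<subseteq> U" by (cases i) (simp add: K1_def)
  qed
  have C21: "(\<Union>j\<in>C2. cball (fst j) (snd j)) \<subseteq> (\<Union>i\<in>C1. cball (fst i) (snd i))"
  proof (intro UN_least)
    fix j assume "j \<in> C2"
    then obtain i where "i \<in> C1" "cball (fst j) (snd j) \<subseteq> ball (fst i) (snd i)"
      using C2(2) by (auto simp: K2_def)
    then show "cball (fst j) (snd j) \<subseteq> (\<Union>i\<in>C1. cball (fst i) (snd i))"
      using ball_subset_cball by blast
  qed
  have "W \<subseteq> U" using C21 C1U ball_subset_cball unfolding W_def by blast
  let ?mu = "interval_measure g"
  have dC1: "disjoint_family_on (\<lambda>i. cball (fst i) (snd i)) C1"
    using C1(3) unfolding disjoint_family_on_def pairwise_def disjnt_def by blast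
  have dC2: "disjoint_family_on (\<lambda>i. cball (fst i) (snd i)) C2"
    using C2(3) unfolding disjoint_family_on_def pairwise_def disjnt_def by blast
  have dC2b: "disjoint_family_on (\<lambda>i. ball (fst i) (snd i)) C2"
    using dC2 ball_subset_cball unfolding disjoint_family_on_def by blast
  have r1: "0 < snd i" if "i \<in> C1" for i using that C1(2) pos1 by blast
  have r2: "0 < snd i" if "i \<in> C2" for i using that C2(2) pos2 by blast
  have eW: "emeasure lborel W = (\<integral>\<^sup>+j. ennreal (2 * snd j) \<partial>count_space C2)"
  proof -
    have "emeasure lborel W = (\<integral>\<^sup>+j. emeasure lborel (ball (fst j) (snd j)) \<partial>count_space C2)"
      unfolding W_def by (rule emeasure_UN_countable) (auto simp: C2(1) dC2b)
    also have "\<dots> = (\<integral>\<^sup>+j. ennreal (2 * snd j) \<partial>count_space C2)"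
    proof (intro nn_integral_cong)
      fix j assume "j \<in> space (count_space C2)"
      then have "0 < snd j" using r2 by simp
      then show "emeasure lborel (ball (fst j) (snd j)) = ennreal (2 * snd j)"
        by (simp add: ball_eq_greaterThanLessThan emeasure_lborel_Ioo)
    qed
    finally show ?thesis .
  qed
  have eC1: "emeasure lborel (\<Union>i\<in>C1. cball (fst i) (snd i)) = (\<integral>\<^sup>+j. ennreal (2 * snd j) \<partial>count_space C1)"
  proof -
    have "emeasure lborel (\<Union>i\<in>C1. cball (fst i) (snd i)) = (\<integral>\<^sup>+j. emeasure lborel (cball (fst j) (snd j)) \<partial>count_space C1)"
      by (rule emeasure_UN_countable) (auto simp: C1(1) dC1)
    also have "\<dots> = (\<integral>\<^sup>+j. ennreal (2 * snd j) \<partial>count_space C1)"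
    proof (intro nn_integral_cong)
      fix j assume "j \<in> space (count_space C1)"
      then have "0 < snd j" using r1 by simp
      then show "emeasure lborel (cball (fst j) (snd j)) = ennreal (2 * snd j)"
        by (simp add: cball_eq_atLeastAtMost)
    qed
    finally show ?thesis .
  qed
  have mC1: "emeasure ?mu (\<Union>i\<in>C1. cball (fst i) (snd i)) = (\<integral>\<^sup>+j. ennreal (g (fst j + snd j) - g (fst j - snd j)) \<partial>count_space C1)"
  proof -
    have "emeasure ?mu (\<Union>i\<in>C1. cball (fst i) (snd i)) = (\<integral>\<^sup>+j. emeasure ?mu (cball (fst j) (snd j)) \<partial>count_space C1)"
      by (rule emeasure_UN_countable) (auto simp: C1(1) dC1)
    also have "\<dots> = (\<integral>\<^sup>+j. ennreal (g (fst j + snd j) - g (fst j - snd j)) \<partial>count_space C1)"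
    proof (intro nn_integral_cong)
      fix j assume "j \<in> space (count_space C1)"
      then have "0 < snd j" using r1 by simp
      then show "emeasure ?mu (cball (fst j) (snd j)) = ennreal (g (fst j + snd j) - g (fst j - snd j))"
        by (simp add: mu_cball[OF g])
    qed
    finally show ?thesis .
  qed
  have mC2: "emeasure ?mu (\<Union>i\<in>C2. cball (fst i) (snd i)) = (\<integral>\<^sup>+j. ennreal (g (fst j + snd j) - g (fst j - snd j)) \<partial>count_space C2)"
  proof -
    have "emeasure ?mu (\<Union>i\<in>C2. cball (fst i) (snd i)) = (\<integral>\<^sup>+j. emeasure ?mu (cball (fst j) (snd j)) \<partial>count_space C2)"
      by (rule emeasure_UN_countable) (auto simp: C2(1) dC2)
    also have "\<dots> = (\<integral>\<^sup>+j. ennreal (g (fst j + snd j) - g (fst j - snd j)) \<partial>count_space C2)"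
    proof (intro nn_integral_cong)
      fix j assume "j \<in> space (count_space C2)"
      then have "0 < snd j" using r2 by simp
      then show "emeasure ?mu (cball (fst j) (snd j)) = ennreal (g (fst j + snd j) - g (fst j - snd j))"
        by (simp add: mu_cball[OF g])
    qed
    finally show ?thesis .
  qed
  have "ennreal q * emeasure lborel W = (\<integral>\<^sup>+j. ennreal q * ennreal (2 * snd j) \<partial>count_space C2)"
    unfolding eW by (rule nn_integral_cmult[symmetric]) simp
  also have "\<dots> \<le> (\<integral>\<^sup>+j. ennreal (g (fst j + snd j) - g (fst j - snd j)) \<partial>count_space C2)"
  proof (intro nn_integral_mono)
    fix j assume "j \<in> space (count_space C2)"
    then have "j \<in> K2" using C2(2) by auto
    then have "q * (2 * snd j) \<le> g (fst j + snd j) - g (fst j - snd j)" by (cases j) (simp add: K2_def)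
    then show "ennreal q * ennreal (2 * snd j) \<le> ennreal (g (fst j + snd j) - g (fst j - snd j))"
      using pq by (simp add: ennreal_mult'[symmetric] ennreal_leI)
  qed
  also have "\<dots> = emeasure ?mu (\<Union>i\<in>C2. cball (fst i) (snd i))" using mC2 by simp
  also have "\<dots> \<le> emeasure ?mu (\<Union>i\<in>C1. cball (fst i) (snd i))"
    by (rule emeasure_mono[OF C21]) (auto simp: C1(1))
  also have "\<dots> \<le> (\<integral>\<^sup>+j. ennreal p * ennreal (2 * snd j) \<partial>count_space C1)"
    unfolding mC1
  proof (intro nn_integral_mono)
    fix j assume "j \<in> space (count_space C1)"
    then have "j \<in> K1" using C1(2) by auto
    then have "g (fst j + snd j) - g (fst j - snd j) \<le> p * (2 * snd j)" by (cases j) (simp add: K1_def)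
    then show "ennreal (g (fst j + snd j) - g (fst j - snd j)) \<le> ennreal p * ennreal (2 * snd j)"
      using pq by (simp add: ennreal_mult'[symmetric] ennreal_leI)
  qed
  also have "\<dots> = ennreal p * emeasure lborel (\<Union>i\<in>C1. cball (fst i) (snd i))"
    unfolding eC1 by (rule nn_integral_cmult) simp
  also have "\<dots> \<le> ennreal p * emeasure lborel U"
    using C1U U(1) by (intro mult_left_mono emeasure_mono) auto
  finally have ineq: "ennreal q * emeasure lborel W \<le> ennreal p * emeasure lborel U" .
  have Ul: "emeasure lborel U = ennreal (measure lebesgue U)"
    using U by (simp add: fmeasurable_def emeasure_eq_ennreal_measure)
  have Wl: "W \<in> lmeasurable" using \<open>open W\<close> \<open>W \<subseteq> U\<close> U(2) by (rule open_sub_lmeasurable)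
  have Wl': "emeasure lborel W = ennreal (measure lebesgue W)"
    using Wl \<open>open W\<close> by (simp add: fmeasurable_def emeasure_eq_ennreal_measure)
  have "ennreal (q * measure lebesgue W) \<le> ennreal (p * measure lebesgue U)"
    using ineq pq unfolding Ul Wl' by (simp add: ennreal_mult'[symmetric])
  then have "q * measure lebesgue W \<le> p * measure lebesgue U"
    using pq by (simp add: ennreal_le_iff)
  then have "measure lebesgue W \<le> p / q * measure lebesgue U"
    using pq by (simp add: field_simps)
  then show ?thesis using that \<open>open W\<close> \<open>W \<subseteq> U\<close> \<open>negligible N\<close> \<open>E \<subseteq> W \<union> N\<close> by blast
qed


lemma bad_bounded_negligible:
  fixes g :: "real \<Rightarrow> real" and E Uo :: "real set"
  assumes g: "mono g" "continuous_on UNIV g" and pq: "0 < p" "p < q"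
    and U: "open Uo" "Uo \<in> lmeasurable" and EU: "E \<subseteq> Uo"
    and Ex: "\<And>x. x \<in> E \<Longrightarrow> lowq g p x \<and> upq g q x"
  shows "negligible E"
proof -
  have it: "\<exists>W N. open W \<and> W \<subseteq> Uo \<and> negligible N \<and> E \<subseteq> W \<union> N \<and>
     measure lebesgue W \<le> (p/q)^n * measure lebesgue Uo" for n
  proof (induction n)
    case 0
    show ?case using U EU by (intro exI[of _ Uo] exI[of _ "{}"]) auto
  next
    case (Suc n)
    then obtain W N where WN: "open W" "W \<subseteq> Uo" "negligible N" "E \<subseteq> W \<union> N"
       "measure lebesgue W \<le> (p/q)^n * measure lebesgue Uo" by blast
    have Wl: "W \<in> lmeasurable" using WN(1,2) U(2) by (rule open_sub_lmeasurable)
    obtain W' N' where W'N': "open W'" "W' \<subseteq> W" "negligible N'" "E - N \<subseteq> W' \<union> N'"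
       "measure lebesgue W' \<le> p / q * measure lebesgue W"
      by (rule vitali_step[OF g pq WN(1) Wl, of "E - N"]) (use WN(4) Ex in auto)
    have "measure lebesgue W' \<le> p / q * ((p/q)^n * measure lebesgue Uo)"
      using W'N'(5) WN(5) pq by (smt (verit) divide_pos_pos mult_left_mono)
    then have "measure lebesgue W' \<le> (p/q)^(Suc n) * measure lebesgue Uo" by (simp add: mult.assoc)
    moreover have "negligible (N \<union> N')" using WN(3) W'N'(3) by simp
    moreover have "E \<subseteq> W' \<union> (N \<union> N')" using W'N'(4) by blast
    ultimately show ?case using W'N'(1,2) WN(2) by (intro exI[of _ W'] exI[of _ "N \<union> N'"]) auto
  qed
  show ?thesis unfolding negligible_outer
  proof (intro allI impI)
    fix e :: real assume e: "e > 0"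
    define M where "M = measure lebesgue Uo"
    have M: "M \<ge> 0" by (simp add: M_def)
    obtain n where n: "(p/q)^n < e / (M + 1)"
      using real_arch_pow_inv[of "e / (M+1)" "p/q"] e M pq by auto
    obtain W N where WN: "open W" "W \<subseteq> Uo" "negligible N" "E \<subseteq> W \<union> N"
       "measure lebesgue W \<le> (p/q)^n * M" using it[of n] unfolding M_def by blast
    have Wl: "W \<in> lmeasurable" using WN(1,2) U(2) by (rule open_sub_lmeasurable)
    have "(p/q)^n * M \<le> (p/q)^n * (M+1)" using pq by simp
    also have "\<dots> < e" using n M by (simp add: pos_less_divide_eq)
    finally have "measure lebesgue W < e" using WN(5) by linarith
    moreover have "measure lebesgue (W \<union> N) = measure lebesgue W"
      using Wl WN(3) by (intro measure_Un_null_set) (auto simp: negligible_iff_null_sets)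
    moreover have "W \<union> N \<in> lmeasurable" using Wl WN(3) negligible_imp_measurable by blast
    ultimately show "\<exists>T. E \<subseteq> T \<and> T \<in> lmeasurable \<and> measure lebesgue T < e"
      using WN(4) by (intro exI[of _ "W \<union> N"]) auto
  qed
qed

lemma bad_negligible:
  fixes g :: "real \<Rightarrow> real"
  assumes g: "mono g" "continuous_on UNIV g" and pq: "0 < p" "p < q"
  shows "negligible {x. lowq g p x \<and> upq g q x}"
proof -
  have "{x. lowq g p x \<and> upq g q x} = (\<Union>n. {x. lowq g p x \<and> upq g q x} \<inter> ball 0 (real n))"
  proof (intro equalityI subsetI)
    fix x assume "x \<in> {x. lowq g p x \<and> upq g q x}"
    moreover obtain n where "\<bar>x\<bar> < real n" using reals_Archimedean2 by blast
    ultimately show "x \<in> (\<Union>n. {x. lowq g p x \<and> upq g q x} \<inter> ball 0 (real n))" by auto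
  qed auto
  also have "negligible \<dots>"
  proof (intro negligible_countable_Union)
    fix S assume "S \<in> range (\<lambda>n::nat. {x. lowq g p x \<and> upq g q x} \<inter> ball 0 (real n))"
    then obtain n::nat where S: "S = {x. lowq g p x \<and> upq g q x} \<inter> ball 0 (real n)" by auto
    show "negligible S" unfolding S
      by (rule bad_bounded_negligible[OF g pq, where Uo="ball 0 (real n)"]) auto
  qed auto
  finally show ?thesis .
qed

lemma dini_negligible:
  fixes g :: "real \<Rightarrow> real"
  assumes g: "mono g" "continuous_on UNIV g"
  shows "negligible {x. \<exists>p\<in>\<rat>. \<exists>q\<in>\<rat>. 0 < p \<and> p < q \<and> lowq g p x \<and> upq g q x}"
proof -
  have "{x. \<exists>p\<in>\<rat>. \<exists>q\<in>\<rat>. 0 < p \<and> p < q \<and> lowq g p x \<and> upq g q x}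
      = (\<Union>pq\<in>\<rat>\<times>\<rat>. {x. 0 < fst pq \<and> fst pq < snd pq \<and> lowq g (fst pq) x \<and> upq g (snd pq) x})"
    by force
  also have "negligible \<dots>"
  proof (intro negligible_countable_Union)
    show "countable ((\<lambda>pq. {x. 0 < fst pq \<and> fst pq < snd pq \<and> lowq g (fst pq) x \<and> upq g (snd pq) x}) ` (\<rat>\<times>\<rat>))"
      by (intro countable_image countable_SIGMA countable_rat)
  next
    fix S assume "S \<in> (\<lambda>pq. {x. 0 < fst pq \<and> fst pq < snd pq \<and> lowq g (fst pq) x \<and> upq g (snd pq) x}) ` (\<rat>\<times>\<rat>)"
    then obtain p q where S: "S = {x. 0 < p \<and> p < q \<and> lowq g p x \<and> upq g q x}" by auto
    show "negligible S"
    proof (cases "0 < p \<and> p < q")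
      case True then show ?thesis unfolding S using bad_negligible[OF g, of p q] by simp
    next
      case False
      then have "S = {}" unfolding S by auto
      then show ?thesis by simp
    qed
  qed
  finally show ?thesis .
qed

lemma si: "integrable lborel (h::real\<Rightarrow>real) \<Longrightarrow> A \<in> sets borel \<Longrightarrow> set_integrable lborel A h"
  unfolding set_integrable_def by (rule integrable_mult_indicator) auto

lemma split1:
  fixes h :: "real \<Rightarrow> real"
  assumes "integrable lborel h" "x \<le> y"
  shows "(LBINT t:{..y}. h t) = (LBINT t:{..x}. h t) + (LBINT t:{x<..y}. h t)"
proof -
  have "{..y} = {..x} \<union> {x<..y}" using assms(2) by auto
  moreover have "(LBINT t:({..x} \<union> {x<..y}). h t) = (LBINT t:{..x}. h t) + (LBINT t:{x<..y}. h t)"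
    by (rule set_integral_Un) (auto intro!: si[OF assms(1)])
  ultimately show ?thesis by simp
qed

lemma split_tot:
  fixes h :: "real \<Rightarrow> real"
  assumes "integrable lborel h"
  shows "(LBINT t:{..x}. h t) + (LBINT t:{x<..}. h t) = (LBINT t. h t)"
proof -
  have "(LBINT t:{..x}. h t) + (LBINT t:{x<..}. h t) = (LBINT t:({..x} \<union> {x<..}). h t)"
    by (rule set_integral_Un[symmetric]) (auto intro!: si[OF assms(1)])
  also have "{..x} \<union> {x<..} = (UNIV :: real set)" by auto
  also have "(LBINT t:UNIV. h t) = (LBINT t. h t)" by (simp add: set_lebesgue_integral_def)
  finally show ?thesis .
qed

lemma tail_eq:
  fixes h :: "real \<Rightarrow> real"
  assumes "integrable lborel h"
  shows "(LBINT t:{x..}. h t) = (LBINT t:{x<..}. h t)"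
proof -
  have "(LBINT t:{x..}. h t) = (LBINT t:({x} \<union> {x<..}). h t)"
    by (rule arg_cong[where f="\<lambda>A. LBINT t:A. h t"]) auto
  also have "\<dots> = (LBINT t:{x}. h t) + (LBINT t:{x<..}. h t)"
    by (rule set_integral_Un) (auto intro!: si[OF assms(1)])
  also have "(LBINT t:{x}. h t) = 0"
    using assms by (subst set_integral_at_point) (auto simp: si)
  finally show ?thesis by simp
qed

lemma lim_bot:
  fixes h :: "real \<Rightarrow> real"
  assumes h: "integrable lborel h"
  shows "((\<lambda>y. LBINT t:{..y}. h t) \<longlongrightarrow> 0) at_bot"
proof -
  have "((\<lambda>y. LBINT t:{..-y}. h t) \<longlongrightarrow> (LINT (t::real)|lborel. (0::real))) at_top"
    unfolding set_lebesgue_integral_def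
  proof (rule integral_dominated_convergence_at_top[where w="\<lambda>t. \<bar>h t\<bar>" and s="\<lambda>y t. indicator {..-y} t *\<^sub>R h t" and f="\<lambda>t. 0"])
    show "integrable lborel (\<lambda>t. \<bar>h t\<bar>)" using h by simp
    show "(\<lambda>t. indicator {..-y} t *\<^sub>R h t) \<in> borel_measurable lborel" for y
      using h by (intro borel_measurable_integrable integrable_mult_indicator) auto
    show "AE t in lborel. ((\<lambda>y. indicator {..-y} t *\<^sub>R h t) \<longlongrightarrow> 0) at_top"
    proof (intro AE_I2)
      fix t :: real
      have "eventually (\<lambda>y. indicator {..-y} t *\<^sub>R h t = 0) at_top"
        using eventually_gt_at_top[of "-t"] by eventually_elim (auto simp: indicator_def)
      then show "((\<lambda>y. indicator {..-y} t *\<^sub>R h t) \<longlongrightarrow> 0) at_top"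
        by (rule tendsto_eventually)
    qed
    show "\<forall>\<^sub>F y in at_top. AE t in lborel. norm (indicator {..-y} t *\<^sub>R h t) \<le> \<bar>h t\<bar>"
      by (intro always_eventually allI AE_I2) (auto simp: indicator_def)
  qed simp
  then show ?thesis by (simp add: filterlim_at_bot_mirror)
qed

lemma lim_top:
  fixes h :: "real \<Rightarrow> real"
  assumes h: "integrable lborel h"
  shows "((\<lambda>y. LBINT t:{y<..}. h t) \<longlongrightarrow> 0) at_top"
proof -
  have "((\<lambda>y. LBINT t:{y<..}. h t) \<longlongrightarrow> (LINT (t::real)|lborel. (0::real))) at_top"
    unfolding set_lebesgue_integral_def
  proof (rule integral_dominated_convergence_at_top[where w="\<lambda>t. \<bar>h t\<bar>" and s="\<lambda>y t. indicator {y<..} t *\<^sub>R h t" and f="\<lambda>t. 0"])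
    show "integrable lborel (\<lambda>t. \<bar>h t\<bar>)" using h by simp
    show "(\<lambda>t. indicator {y<..} t *\<^sub>R h t) \<in> borel_measurable lborel" for y
      using h by (intro borel_measurable_integrable integrable_mult_indicator) auto
    show "AE t in lborel. ((\<lambda>y. indicator {y<..} t *\<^sub>R h t) \<longlongrightarrow> 0) at_top"
    proof (intro AE_I2)
      fix t :: real
      have "eventually (\<lambda>y. indicator {y<..} t *\<^sub>R h t = 0) at_top"
        using eventually_gt_at_top[of "t"] by eventually_elim (auto simp: indicator_def)
      then show "((\<lambda>y. indicator {y<..} t *\<^sub>R h t) \<longlongrightarrow> 0) at_top"
        by (rule tendsto_eventually)
    qed
    show "\<forall>\<^sub>F y in at_top. AE t in lborel. norm (indicator {y<..} t *\<^sub>R h t) \<le> \<bar>h t\<bar>"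
      by (intro always_eventually allI AE_I2) (auto simp: indicator_def)
  qed simp
  then show ?thesis by simp
qed

lemma cdf_deriv:
  fixes h :: "real \<Rightarrow> real"
  assumes h: "integrable lborel h" "continuous_on UNIV h"
  shows "((\<lambda>y. LBINT t:{..y}. h t) has_real_derivative h x) (at x)"
proof -
  define a where "a = x - 1"
  define b where "b = x + 1"
  define K where "K = (LBINT t:{..<a}. h t)"
  have eq: "(LBINT t:{..y}. h t) = K + integral {a..y} h" if "y \<in> {a<..<b}" for y
  proof -
    have "{..y} = {..<a} \<union> {a..y}" using that by auto
    then have "(LBINT t:{..y}. h t) = (LBINT t:({..<a} \<union> {a..y}). h t)" by simp
    also have "\<dots> = K + (LBINT t:{a..y}. h t)"
      unfolding K_def by (rule set_integral_Un) (auto intro!: si[OF h(1)])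
    also have "(LBINT t:{a..y}. h t) = integral {a..y} h"
      using h by (intro set_borel_integral_eq_integral si) auto
    finally show ?thesis .
  qed
  have "((\<lambda>y. integral {a..y} h) has_real_derivative h x) (at x within {a..b})"
    using h by (intro integral_has_real_derivative) (auto simp: a_def b_def intro: continuous_on_subset)
  then have "((\<lambda>y. integral {a..y} h) has_real_derivative h x) (at x within {a<..<b})"
    by (rule DERIV_subset) auto
  then have "((\<lambda>y. integral {a..y} h) has_real_derivative h x) (at x)"
    by (subst (asm) at_within_open) (auto simp: a_def b_def)
  then have "((\<lambda>y. K + integral {a..y} h) has_real_derivative h x) (at x)"
    using DERIV_add[OF DERIV_const] by fastforce
  then show ?thesis
    by (rule has_field_derivative_transform_within_open[of _ _ _ "{a<..<b}"])
       (auto simp: a_def b_def eq)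
qed

lemma ratio_bounds:
  fixes a b c C :: real
  assumes "0 < a" "c * a \<le> b" "b \<le> C * a" "0 < c"
  shows "1 / C \<le> a / b \<and> a / b \<le> 1 / c"
proof -
  have b: "0 < b" using assms by (smt (verit) mult_pos_pos)
  have C: "0 < C" using assms by (smt (verit) mult_pos_pos mult_le_cancel_right)
  have "1 / C \<le> a / b" using assms b C by (simp add: field_simps mult.commute)
  moreover have "a / b \<le> 1 / c" using assms b by (simp add: field_simps mult.commute)
  ultimately show ?thesis by simp
qed

lemma ratio_id:
  fixes a d e f :: real
  assumes "e \<noteq> 0" "f \<noteq> 0"
  shows "a / d = (a / e * (f / d)) * (e / f)"
  using assms by (simp add: field_simps)

lemma pointwise:
  fixes T Fm Ff m :: "real \<Rightarrow> real" and x c C :: real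
  assumes Fm_der: "\<And>z. (Fm has_real_derivative m z) (at z)"
    and mpos: "\<And>z. m z > 0"
    and FfT: "\<And>z. Ff (T z) = Fm z"
    and Tstrict: "\<And>a b. a < b \<Longrightarrow> T a < T b"
    and Tcont: "isCont T x"
    and Fmstrict: "\<And>a b. a < b \<Longrightarrow> Fm a < Fm b"
    and incr: "\<And>a b. a < b \<Longrightarrow> c * (Fm b - Fm a) \<le> Ff b - Ff a \<and> Ff b - Ff a \<le> C * (Fm b - Fm a)"
    and cC: "0 < c" "c < C"
    and notbad: "\<not> (\<exists>p\<in>\<rat>. \<exists>q\<in>\<rat>. 0 < p \<and> p < q \<and> lowq T p x \<and> upq T q x)"
  shows "\<exists>L. (T has_real_derivative L) (at x) \<and> m x / (C * m (T x)) \<le> L \<and> L \<le> m x / (c * m (T x))"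
proof -
  define Q where "Q = (\<lambda>y. (T y - T x) / (y - x))"
  define Bq where "Bq = (\<lambda>y. (Fm (T y) - Fm (T x)) / (Fm y - Fm x))"
  define P where "P = (\<lambda>y. ((T y - T x) / (Fm (T y) - Fm (T x))) * ((Fm y - Fm x) / (y - x)))"
  define \<rho> where "\<rho> = m x / m (T x)"
  have \<rho>: "\<rho> > 0" using mpos by (simp add: \<rho>_def)
  have Tne: "T y \<noteq> T x" if "y \<noteq> x" for y
    using Tstrict that by (metis less_irrefl linorder_neqE_linordered_idom)
  have Fmne: "Fm a \<noteq> Fm b" if "a \<noteq> b" for a b
    using Fmstrict that by (metis less_irrefl linorder_neqE_linordered_idom)
  have Qeq: "Q y = P y * Bq y" if "y \<noteq> x" for y
    using Fmne[OF that] Fmne[OF Tne[OF that]] unfolding Q_def P_def Bq_def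
    by (intro ratio_id) auto
  have Bqb: "1 / C \<le> Bq y \<and> Bq y \<le> 1 / c" if "y \<noteq> x" for y
  proof (cases "x < y")
    case True
    then have "T x < T y" by (rule Tstrict)
    from incr[OF this] have "c * (Fm (T y) - Fm (T x)) \<le> Fm y - Fm x \<and> Fm y - Fm x \<le> C * (Fm (T y) - Fm (T x))"
      by (simp add: FfT)
    moreover have "0 < Fm (T y) - Fm (T x)" using Fmstrict[OF \<open>T x < T y\<close>] by simp
    ultimately show ?thesis using ratio_bounds[of "Fm (T y) - Fm (T x)" c "Fm y - Fm x" C] cC
      by (simp add: Bq_def)
  next
    case False
    then have "y < x" using that by simp
    then have "T y < T x" by (rule Tstrict)
    from incr[OF this] have "c * (Fm (T x) - Fm (T y)) \<le> Fm x - Fm y \<and> Fm x - Fm y \<le> C * (Fm (T x) - Fm (T y))"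
      by (simp add: FfT)
    moreover have "0 < Fm (T x) - Fm (T y)" using Fmstrict[OF \<open>T y < T x\<close>] by simp
    moreover have "Bq y = (Fm (T x) - Fm (T y)) / (Fm x - Fm y)"
      unfolding Bq_def by (metis minus_diff_eq minus_divide_divide)
    ultimately show ?thesis using ratio_bounds[of "Fm (T x) - Fm (T y)" c "Fm x - Fm y" C] cC
      by simp
  qed
  have ev_ne: "eventually (\<lambda>y. y \<noteq> x) (at x)"
    unfolding eventually_at by (intro exI[of _ 1]) auto
  have lim1: "((\<lambda>y. (Fm y - Fm x) / (y - x)) \<longlongrightarrow> m x) (at x)"
    using Fm_der[of x] by (simp add: has_field_derivative_iff)
  have limG: "((\<lambda>z. (Fm z - Fm (T x)) / (z - T x)) \<longlongrightarrow> m (T x)) (at (T x))"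
    using Fm_der[of "T x"] by (simp add: has_field_derivative_iff)
  have Tlim: "filterlim T (at (T x)) (at x)"
    unfolding filterlim_at
  proof
    show "\<forall>\<^sub>F y in at x. T y \<in> UNIV \<and> T y \<noteq> T x" using ev_ne by eventually_elim (auto dest: Tne)
    show "(T \<longlongrightarrow> T x) (at x)" using Tcont by (simp add: isCont_def)
  qed
  have "((\<lambda>y. (Fm (T y) - Fm (T x)) / (T y - T x)) \<longlongrightarrow> m (T x)) (at x)"
    using filterlim_compose[OF limG Tlim] .
  then have "((\<lambda>y. inverse ((Fm (T y) - Fm (T x)) / (T y - T x))) \<longlongrightarrow> inverse (m (T x))) (at x)"
    using mpos by (intro tendsto_inverse) (auto simp: less_imp_neq[symmetric])
  then have lim2: "((\<lambda>y. (T y - T x) / (Fm (T y) - Fm (T x))) \<longlongrightarrow> inverse (m (T x))) (at x)"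
    by simp
  have limP: "(P \<longlongrightarrow> \<rho>) (at x)"
  proof -
    have "(P \<longlongrightarrow> inverse (m (T x)) * m x) (at x)" unfolding P_def by (intro tendsto_mult lim1 lim2)
    then show ?thesis by (simp add: \<rho>_def field_simps)
  qed
  have evP: "eventually (\<lambda>y. \<rho>/2 < P y \<and> P y < 2 * \<rho>) (at x)"
    using order_tendstoD(1)[OF limP, of "\<rho>/2"] order_tendstoD(2)[OF limP, of "2*\<rho>"] \<rho>
    by (auto elim: eventually_elim2)
  have evQ: "eventually (\<lambda>y. \<rho>/2 * (1/C) \<le> Q y \<and> Q y \<le> 2 * \<rho> * (1/c)) (at x)"
    using evP ev_ne
  proof eventually_elim
    case (elim y)
    then have B: "1 / C \<le> Bq y \<and> Bq y \<le> 1 / c" using Bqb by blast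
    have C: "0 < C" using cC by simp
    have "\<rho>/2 * (1/C) \<le> P y * Bq y" using elim B \<rho> C by (intro mult_mono) auto
    moreover have "P y * Bq y \<le> 2 * \<rho> * (1/c)" using elim B \<rho> C cC
      by (intro mult_mono) (auto intro: order.trans[of 0 "1/C"])
    ultimately show ?case using Qeq[OF elim(2)] by simp
  qed
  define l where "l = Liminf (at x) (\<lambda>y. ereal (Q y))"
  define u where "u = Limsup (at x) (\<lambda>y. ereal (Q y))"
  have hl: "ereal (\<rho>/2 * (1/C)) \<le> l" unfolding l_def
    by (rule Liminf_bounded) (use evQ in \<open>eventually_elim, simp\<close>)
  have hu: "u \<le> ereal (2 * \<rho> * (1/c))" unfolding u_def
    by (rule Limsup_bounded) (use evQ in \<open>eventually_elim, simp\<close>)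
  have lu: "l \<le> u" unfolding l_def u_def by (rule Liminf_le_Limsup) simp
  obtain lr where lr: "l = ereal lr" using hl lu hu by (cases l) auto
  obtain ur where ur: "u = ereal ur" using hl lu hu by (cases u) auto
  have "\<not> lr < ur"
  proof
    assume "lr < ur"
    then obtain p where p: "p \<in> \<rat>" "lr < p" "p < ur" using Rats_dense_in_real by blast
    then obtain q where q: "q \<in> \<rat>" "p < q" "q < ur" using Rats_dense_in_real by blast
    have C: "0 < C" using cC by simp
    have "0 < \<rho>/2 * (1/C)" using \<rho> C by simp
    then have p0: "0 < p" using hl lr p(2) by simp
    have "lowq T p x"
      unfolding lowq_def
    proof (rule ccontr)
      assume "\<not> (\<forall>d>0. \<exists>y. y \<noteq> x \<and> \<bar>y - x\<bar> < d \<and> (T y - T x) / (y - x) < p)"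
      then obtain d where d: "d > 0" "\<And>y. y \<noteq> x \<Longrightarrow> \<bar>y - x\<bar> < d \<Longrightarrow> p \<le> Q y"
        unfolding Q_def by (metis not_less)
      have "eventually (\<lambda>y. ereal p \<le> ereal (Q y)) (at x)"
        unfolding eventually_at using d by (intro exI[of _ d]) (auto simp: dist_real_def)
      then have "ereal p \<le> l" unfolding l_def by (rule Liminf_bounded)
      then show False using lr p(2) by simp
    qed
    moreover have "upq T q x"
      unfolding upq_def
    proof (rule ccontr)
      assume "\<not> (\<forall>d>0. \<exists>y. y \<noteq> x \<and> \<bar>y - x\<bar> < d \<and> q < (T y - T x) / (y - x))"
      then obtain d where d: "d > 0" "\<And>y. y \<noteq> x \<Longrightarrow> \<bar>y - x\<bar> < d \<Longrightarrow> Q y \<le> q"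
        unfolding Q_def by (metis not_less)
      have "eventually (\<lambda>y. ereal (Q y) \<le> ereal q) (at x)"
        unfolding eventually_at using d by (intro exI[of _ d]) (auto simp: dist_real_def)
      then have "u \<le> ereal q" unfolding u_def by (rule Limsup_bounded)
      then show False using ur q(3) by simp
    qed
    ultimately show False using notbad p q p0 by blast
  qed
  then have "lr = ur" using lu lr ur by simp
  then have "((\<lambda>y. ereal (Q y)) \<longlongrightarrow> ereal lr) (at x)"
    using lr ur by (intro Liminf_eq_Limsup) (auto simp: l_def u_def)
  then have limQ: "(Q \<longlongrightarrow> lr) (at x)" by (simp add: lim_ereal)
  then have der: "(T has_real_derivative lr) (at x)"
    by (simp add: has_field_derivative_iff Q_def)
  have limB: "((\<lambda>y. Q y / P y) \<longlongrightarrow> lr / \<rho>) (at x)"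
    using \<rho> by (intro tendsto_divide limQ limP) auto
  have evB: "eventually (\<lambda>y. Q y / P y = Bq y) (at x)"
    using evP ev_ne by eventually_elim (use Qeq \<rho> in auto)
  have evB2: "eventually (\<lambda>y. 1/C \<le> Q y / P y \<and> Q y / P y \<le> 1/c) (at x)"
    using evB ev_ne by eventually_elim (use Bqb in auto)
  have "1 / C \<le> lr / \<rho>"
    by (rule tendsto_lowerbound[OF limB]) (use evB2 in \<open>auto elim: eventually_mono\<close>)
  moreover have "lr / \<rho> \<le> 1 / c"
    by (rule tendsto_upperbound[OF limB]) (use evB2 in \<open>auto elim: eventually_mono\<close>)
  ultimately have "\<rho> / C \<le> lr \<and> lr \<le> \<rho> / c" using \<rho> cC
    by (auto simp: field_simps)
  then have "m x / (C * m (T x)) \<le> lr \<and> lr \<le> m x / (c * m (T x))"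
    by (simp add: \<rho>_def mult.commute)
  then show ?thesis using der by blast
qed

lemma nonneg_si:
  fixes h :: "real \<Rightarrow> real"
  assumes "\<And>t. 0 \<le> h t"
  shows "0 \<le> (LBINT t:A. h t)"
  unfolding set_lebesgue_integral_def using assms
  by (intro integral_nonneg_AE AE_I2) (simp add: indicator_def)

theorem lemma2p6:
  fixes V f :: "real \<Rightarrow> real" and L C\<^sub>V c C :: real
  assumes V_convex: "convex_on UNIV V"
    and V_lip: "L-lipschitz_on UNIV V"
    and m_int: "integrable lborel (\<lambda>x. exp (- V x))"
    and m_prob: "(LBINT x. exp (- V x)) = 1"
    and CV_pos: "C\<^sub>V > 0"
    and CV_bound: "\<And>x. 1 / C\<^sub>V \<le> exp (- V x) /
          min (LBINT t:{..x}. exp (- V t)) (LBINT t:{x..}. exp (- V t))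
        \<and> exp (- V x) /
          min (LBINT t:{..x}. exp (- V t)) (LBINT t:{x..}. exp (- V t)) \<le> C\<^sub>V"
    and cC: "0 < c" "c < C"
    and f_meas: "f \<in> borel_measurable borel"
    and f_int: "integrable lborel f"
    and f_prob: "(LBINT x. f x) = 1"
    and f_bounds: "AE x in lborel. c * exp (- V x) \<le> f x \<and> f x \<le> C * exp (- V x)"
  shows "AE x in lborel. \<exists>D.
           (ot_map (\<lambda>x. exp (- V x)) f has_real_derivative D) (at x)
         \<and> c / (C * C\<^sub>V\<^sup>2) \<le> D \<and> D \<le> C * C\<^sub>V\<^sup>2 / c"
proof -
  define m where "m = (\<lambda>x. exp (- V x))"
  define Fm where "Fm = (\<lambda>y. LBINT t:{..y}. m t)"
  define Ff where "Ff = (\<lambda>y. LBINT t:{..y}. f t)"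
  define Rm where "Rm = (\<lambda>y. LBINT t:{y<..}. m t)"
  define Rf where "Rf = (\<lambda>y. LBINT t:{y<..}. f t)"
  define T where "T = ot_map m f"
  have mpos: "\<And>z. m z > 0" by (simp add: m_def)
  have Vcont: "continuous_on UNIV V" using V_lip by (rule lipschitz_on_continuous_on)
  have mcont: "continuous_on UNIV m" unfolding m_def
    by (intro continuous_intros Vcont)
  have mint: "integrable lborel m" using m_int by (simp add: m_def)
  have FmRm: "Fm y + Rm y = 1" for y
    using split_tot[OF mint, of y] m_prob by (simp add: Fm_def Rm_def m_def)
  have FfRf: "Ff y + Rf y = 1" for y
    using split_tot[OF f_int, of y] f_prob by (simp add: Ff_def Rf_def)
  have Fm_der: "(Fm has_real_derivative m z) (at z)" for z
    unfolding Fm_def by (rule cdf_deriv[OF mint mcont])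
  have Fm_cont: "isCont Fm z" for z using Fm_der by (rule DERIV_isCont)
  have Fm_strict: "Fm a < Fm b" if "a < b" for a b
    using that by (rule DERIV_pos_imp_increasing) (use Fm_der mpos in blast)
  have Fm_nn: "0 \<le> Fm y" for y unfolding Fm_def by (rule nonneg_si) (simp add: m_def)
  have Rm_nn: "0 \<le> Rm y" for y unfolding Rm_def by (rule nonneg_si) (simp add: m_def)
  have Fm_pos: "0 < Fm y" for y using Fm_strict[of "y - 1" y] Fm_nn[of "y - 1"] by simp
  have Rm_pos: "0 < Rm y" for y
    using Fm_strict[of y "y + 1"] Rm_nn[of "y + 1"] FmRm[of y] FmRm[of "y+1"] by simp
  have bnd: "c * (LBINT t:A. m t) \<le> (LBINT t:A. f t) \<and> (LBINT t:A. f t) \<le> C * (LBINT t:A. m t)"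
    if A: "A \<in> sets borel" for A
  proof
    have AEl: "AE x in lborel. c * m x \<le> f x" by (rule eventually_mono[OF f_bounds]) (simp add: m_def)
    have "(LBINT t:A. c * m t) \<le> (LBINT t:A. f t)"
      using A by (intro set_integral_mono_AE si mint f_int integrable_mult_right)
         (auto intro: eventually_mono[OF AEl])
    then show "c * (LBINT t:A. m t) \<le> (LBINT t:A. f t)" by simp
    have AEu: "AE x in lborel. f x \<le> C * m x" by (rule eventually_mono[OF f_bounds]) (simp add: m_def)
    have "(LBINT t:A. f t) \<le> (LBINT t:A. C * m t)"
      using A by (intro set_integral_mono_AE si mint f_int integrable_mult_right)
         (auto intro: eventually_mono[OF AEu])
    then show "(LBINT t:A. f t) \<le> C * (LBINT t:A. m t)" by simp
  qed
  have incr: "c * (Fm b - Fm a) \<le> Ff b - Ff a \<and> Ff b - Ff a \<le> C * (Fm b - Fm a)" if "a \<le> b" for a b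
    using bnd[of "{a<..b}"] split1[OF mint that] split1[OF f_int that]
    by (simp add: Fm_def Ff_def)
  have Fbnd: "c * Fm y \<le> Ff y \<and> Ff y \<le> C * Fm y" for y
    using bnd[of "{..y}"] by (simp add: Fm_def Ff_def)
  have Rbnd: "c * Rm y \<le> Rf y \<and> Rf y \<le> C * Rm y" for y
    using bnd[of "{y<..}"] by (simp add: Rm_def Rf_def)
  have Ff_strict: "Ff a < Ff b" if "a < b" for a b
  proof -
    have "0 < c * (Fm b - Fm a)" using Fm_strict[OF that] cC by simp
    then show ?thesis using incr[of a b] that by simp
  qed
  have Ff_mono: "Ff a \<le> Ff b" if "a \<le> b" for a b
    using Ff_strict[of a b] that by (cases "a = b") auto
  have Ff_cont: "isCont Ff z" for z
  proof -
    have "((\<lambda>y. Ff y - Ff z) \<longlongrightarrow> 0) (at z)"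
    proof (rule Lim_null_comparison)
      show "\<forall>\<^sub>F y in at z. norm (Ff y - Ff z) \<le> C * \<bar>Fm y - Fm z\<bar>"
      proof (intro always_eventually allI)
        fix y show "norm (Ff y - Ff z) \<le> C * \<bar>Fm y - Fm z\<bar>"
        proof (cases "y \<le> z")
          case True
          then have "Ff y \<le> Ff z" "Fm y \<le> Fm z" using Ff_mono Fm_strict[of y z] by (auto simp: less_eq_real_def)
          then show ?thesis using incr[OF True] by simp
        next
          case False
          then have F: "z \<le> y" by simp
          then have "Ff z \<le> Ff y" "Fm z \<le> Fm y" using Ff_mono Fm_strict[of z y] by (auto simp: less_eq_real_def)
          then show ?thesis using incr[OF F] by simp
        qed
      qed
      have "((\<lambda>y. Fm y - Fm z) \<longlongrightarrow> 0) (at z)"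
        using Fm_cont[of z] by (simp add: isCont_def LIM_zero_iff)
      then have "((\<lambda>y. \<bar>Fm y - Fm z\<bar>) \<longlongrightarrow> 0) (at z)" using tendsto_rabs by fastforce
      then show "((\<lambda>y. C * \<bar>Fm y - Fm z\<bar>) \<longlongrightarrow> 0) (at z)" using tendsto_mult_right_zero by blast
    qed
    then show ?thesis by (simp add: isCont_def LIM_zero_iff)
  qed
  have qinv: "quantile Ff u = z" if "Ff z = u" for u z
  proof -
    have "{y. u \<le> Ff y} = {z..}"
    proof (intro equalityI subsetI)
      fix y assume "y \<in> {y. u \<le> Ff y}"
      then show "y \<in> {z..}" using Ff_strict[of y z] that by (cases "z \<le> y") auto
    next
      fix y assume "y \<in> {z..}" then show "y \<in> {y. u \<le> Ff y}" using Ff_mono[of z y] that by auto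
    qed
    then show ?thesis by (simp add: quantile_def)
  qed
  have surj: "\<exists>z. Ff z = u" if u: "0 < u" "u < 1" for u
  proof -
    have C0: "0 < C" using cC by simp
    have "eventually (\<lambda>y. Fm y < u / C) at_bot"
      using lim_bot[OF mint] u C0 unfolding Fm_def[symmetric] by (intro order_tendstoD) auto
    then obtain y1 where y1: "Fm y1 < u / C" by (auto simp: eventually_at_bot_linorder)
    have "eventually (\<lambda>y. Rm y < (1 - u) / C) at_top"
      using lim_top[OF mint] u C0 unfolding Rm_def[symmetric] by (intro order_tendstoD) auto
    then obtain y2 where y2: "Rm y2 < (1 - u) / C" by (auto simp: eventually_at_top_linorder)
    have "Ff y1 < u" using Fbnd[of y1] y1 C0 by (smt (verit) pos_less_divide_eq mult.commute)
    moreover have "u < Ff y2" using Rbnd[of y2] y2 C0 FfRf[of y2]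
      by (smt (verit) pos_less_divide_eq mult.commute)
    moreover have "y1 \<le> y2" using Ff_mono[of y2 y1] calculation by force
    ultimately obtain z where "Ff z = u"
      using IVT'[of Ff y1 u y2] Ff_cont by (auto intro: continuous_at_imp_continuous_on less_imp_le)
    then show ?thesis by blast
  qed
  have Fm01: "0 < Fm z \<and> Fm z < 1" for z using Fm_pos[of z] Rm_pos[of z] FmRm[of z] by simp
  have cdf_m: "cdf m = Fm" by (simp add: cdf_def[abs_def] Fm_def)
  have cdf_f: "cdf f = Ff" by (simp add: cdf_def[abs_def] Ff_def)
  have Tq: "T z = quantile Ff (Fm z)" for z by (simp add: T_def ot_map_def cdf_m cdf_f)
  have FfT: "Ff (T z) = Fm z" for z
  proof -
    obtain w where w: "Ff w = Fm z" using surj Fm01 by blast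
    then show ?thesis using qinv[OF w] Tq[of z] by simp
  qed
  have Tstrict: "T a < T b" if "a < b" for a b
    using FfT[of a] FfT[of b] Fm_strict[OF that] Ff_mono[of "T b" "T a"] by force
  have Tcont: "isCont T z" for z
  proof -
    have "isCont (quantile Ff) (Ff (T z))"
      by (rule isCont_inverse_function[where d=1]) (auto simp: qinv Ff_cont)
    then have "isCont (quantile Ff) (Fm z)" by (simp add: FfT)
    then have "isCont (\<lambda>y. quantile Ff (Fm y)) z" by (rule isCont_o2[OF Fm_cont])
    then show ?thesis by (simp add: Tq[abs_def])
  qed
  have Tmono: "mono T" unfolding mono_def using Tstrict by (metis less_eq_real_def)
  have Tcon: "continuous_on UNIV T" using Tcont by (simp add: continuous_at_imp_continuous_on)
  define Bad where "Bad = {x. \<exists>p\<in>\<rat>. \<exists>q\<in>\<rat>. 0 < p \<and> p < q \<and> lowq T p x \<and> upq T q x}"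
  have "negligible Bad" unfolding Bad_def by (rule dini_negligible[OF Tmono Tcon])
  then have "AE x in lebesgue. x \<notin> Bad" by (intro AE_not_in) (simp add: negligible_iff_null_sets)
  then have AEgood: "AE x in lborel. x \<notin> Bad" by (simp add: AE_completion_iff)
  define mn where "mn = (\<lambda>y. min (Fm y) (Rm y))"
  have tail: "(LBINT t:{y..}. exp (- V t)) = Rm y" for y
    using tail_eq[OF mint, of y] by (simp add: Rm_def m_def)
  have mn_pos: "0 < mn y" for y using Fm_pos Rm_pos by (simp add: mn_def)
  have CVb: "1 / C\<^sub>V \<le> m y / mn y \<and> m y / mn y \<le> C\<^sub>V" for y
    using CV_bound[of y] by (simp add: tail mn_def m_def Fm_def)
  have RfT: "Rf (T z) = Rm z" for z using FfRf[of "T z"] FmRm[of z] FfT[of z] by simp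
  have mnup: "mn z \<le> C * mn (T z)" for z
    using Fbnd[of "T z"] Rbnd[of "T z"] FfT[of z] RfT[of z] cC unfolding mn_def
    by (auto simp: min_def)
  have mnlo: "c * mn (T z) \<le> mn z" for z
  proof -
    have "c * mn (T z) = min (c * Fm (T z)) (c * Rm (T z))"
      unfolding mn_def using cC by (simp add: min_mult_distrib_left)
    also have "\<dots> \<le> mn z" unfolding mn_def
      using Fbnd[of "T z"] Rbnd[of "T z"] FfT[of z] RfT[of z] by (intro min.mono) auto
    finally show ?thesis .
  qed
  have a1: "m y \<le> C\<^sub>V * mn y" for y
    using CVb[of y] mn_pos[of y] by (simp add: pos_divide_le_eq)
  have a2: "mn y \<le> C\<^sub>V * m y" for y
    using CVb[of y] mn_pos[of y] CV_pos mpos[of y] by (simp add: field_simps)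
  have rho_up: "m z / m (T z) \<le> C * C\<^sub>V\<^sup>2" for z
  proof -
    have "m z \<le> C\<^sub>V * mn z" by (rule a1)
    also have "\<dots> \<le> C\<^sub>V * (C * mn (T z))" using mnup[of z] CV_pos by simp
    also have "\<dots> \<le> C\<^sub>V * (C * (C\<^sub>V * m (T z)))" using a2[of "T z"] CV_pos cC by simp
    finally have "m z \<le> (C * C\<^sub>V\<^sup>2) * m (T z)" by (simp add: power2_eq_square algebra_simps)
    then show ?thesis using mpos[of "T z"] by (simp add: pos_divide_le_eq)
  qed
  have rho_lo: "c / C\<^sub>V\<^sup>2 \<le> m z / m (T z)" for z
  proof -
    have "c * m (T z) \<le> c * (C\<^sub>V * mn (T z))" using a1[of "T z"] cC by simp
    also have "\<dots> = C\<^sub>V * (c * mn (T z))" by simp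
    also have "\<dots> \<le> C\<^sub>V * mn z" using mnlo[of z] CV_pos by simp
    also have "\<dots> \<le> C\<^sub>V * (C\<^sub>V * m z)" using a2[of z] CV_pos by simp
    finally have "c * m (T z) \<le> C\<^sub>V\<^sup>2 * m z" by (simp add: power2_eq_square algebra_simps)
    then show ?thesis using mpos[of "T z"] mpos[of z] CV_pos by (simp add: field_simps)
  qed
  show ?thesis
    using AEgood
  proof (rule eventually_mono)
    fix x assume "x \<notin> Bad"
    then have nb: "\<not> (\<exists>p\<in>\<rat>. \<exists>q\<in>\<rat>. 0 < p \<and> p < q \<and> lowq T p x \<and> upq T q x)"
      by (simp add: Bad_def)
    obtain D where D: "(T has_real_derivative D) (at x)" "m x / (C * m (T x)) \<le> D" "D \<le> m x / (c * m (T x))"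
      using pointwise[OF Fm_der mpos FfT Tstrict Tcont Fm_strict _ cC nb] incr
      by (auto simp: less_imp_le)
    have C0: "0 < C" using cC by simp
    have "c / (C * C\<^sub>V\<^sup>2) = (c / C\<^sub>V\<^sup>2) / C" by simp
    also have "\<dots> \<le> (m x / m (T x)) / C" by (rule divide_right_mono[OF rho_lo[of x]]) (use C0 in simp)
    also have "\<dots> = m x / (C * m (T x))" by simp
    finally have l: "c / (C * C\<^sub>V\<^sup>2) \<le> m x / (C * m (T x))" .
    have "m x / (c * m (T x)) = (m x / m (T x)) / c" by simp
    also have "\<dots> \<le> C * C\<^sub>V\<^sup>2 / c" by (rule divide_right_mono[OF rho_up[of x]]) (use cC in simp)
    finally have u: "m x / (c * m (T x)) \<le> C * C\<^sub>V\<^sup>2 / c" .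
    show "\<exists>D. (ot_map (\<lambda>x. exp (- V x)) f has_real_derivative D) (at x)
         \<and> c / (C * C\<^sub>V\<^sup>2) \<le> D \<and> D \<le> C * C\<^sub>V\<^sup>2 / c"
      using D l u by (auto simp: T_def m_def)
  qed
qed

end
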